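(* Let $[\cdot]_{\mathbb{R}}:\mathbb{C}^d\to\mathbb{R}^{2d}$ be the map $v\mapsto\begin{pmatrix}\operatorname{Re}v\\ \operatorname{Im}v\end{pmatrix}$. Let $v_1,\dots,v_n\in\mathbb{C}^d$. (1) If $([v_1]_{\mathbb{R}},\dots,[v_n]_{\mathbb{R}})$ is a tight frame for $\mathbb{R}^{2d}$, then $(v_1,\dots,v_n)$ is a tight frame for $\mathbb{C}^d$. (2) If $(v_1,\dots,v_n)$ is a tight frame for $\mathbb{C}^d$, then $([v_j]_{\mathbb{R}})_{j=1}^n$ is a tight frame for $\mathbb{R}^{2d}$ if and only if $$\sum_j\sum_k\langle v_j,v_k\rangle^2=0,$$ equivalently, if and only if $\sum_j\sum_k(\operatorname{Re}\langle v_j,v_k\rangle)^2=\sum_j\sum_k(\operatorname{Im}\langle v_j,v_k\rangle)^2$.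
   Context: $\operatorname{Re}v,\operatorname{Im}v\in\mathbb{R}^d$ are the entrywise real and imaginary parts of $v\in\mathbb{C}^d$. Inner products are Euclidean: $\langle v,w\rangle=\sum_j\overline{w_j}v_j$. A sequence $(u_j)$ in $\mathbb{F}^D$ is a tight frame for $\mathbb{F}^D$ if there is $A>0$ with $A\|u\|^2=\sum_j|\langle u,u_j\rangle|^2$ for all $u\in\mathbb{F}^D$. *)

theory Defs
  imports "HOL-Analysis.Analysis"
begin

definition cinner :: "complex ^ 'd \<Rightarrow> complex ^ 'd \<Rightarrow> complex" where
  "cinner v w = (\<Sum>j\<in>UNIV. cnj (w $ j) * v $ j)"

definition realify :: "complex ^ 'd \<Rightarrow> real ^ ('d + 'd)" where
  "realify v = (\<chi> i. case i of Inl j \<Rightarrow> Re (v $ j) | Inr j \<Rightarrow> Im (v $ j))"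

definition tight_frame_C :: "nat \<Rightarrow> (nat \<Rightarrow> complex ^ 'd) \<Rightarrow> bool" where
  "tight_frame_C n u \<longleftrightarrow> (\<exists>A>0. \<forall>x :: complex ^ 'd.
      A * (norm x)\<^sup>2 = (\<Sum>j<n. (cmod (cinner x (u j)))\<^sup>2))"

definition tight_frame_R :: "nat \<Rightarrow> (nat \<Rightarrow> real ^ 'n) \<Rightarrow> bool" where
  "tight_frame_R n u \<longleftrightarrow> (\<exists>A>0. \<forall>x :: real ^ 'n.
      A * (norm x)\<^sup>2 = (\<Sum>j<n. \<bar>x \<bullet> u j\<bar>\<^sup>2))"

end

theory Submission imports Defs begin


lemma cinner_scale: "cinner (c *s x) u = c * cinner x u"
  by (simp add: cinner_def sum_distrib_left mult_ac)

lemma norm_sq: "(norm (x::complex^'d))\<^sup>2 = (\<Sum>i\<in>UNIV. (cmod (x$i))\<^sup>2)"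
  by (simp add: norm_vec_def L2_set_def sum_nonneg)

lemma norm_scale_sq: "(norm (c *s (x::complex^'d)))\<^sup>2 = (cmod c)\<^sup>2 * (norm x)\<^sup>2"
  by (simp add: norm_sq norm_mult power_mult_distrib sum_distrib_left)

lemma realify_inner: "realify x \<bullet> realify u = Re (cinner x u)"
proof -
  have "realify x \<bullet> realify u = (\<Sum>i\<in>UNIV <+> UNIV. realify x $ i * realify u $ i)"
    by (simp add: inner_vec_def)
  also have "\<dots> = (\<Sum>j\<in>UNIV. Re (x$j) * Re (u$j)) + (\<Sum>j\<in>UNIV. Im (x$j) * Im (u$j))"
    by (subst sum.Plus) (auto simp: realify_def)
  also have "\<dots> = Re (cinner x u)"
    by (simp add: cinner_def Re_sum sum.distrib[symmetric] algebra_simps)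
  finally show ?thesis .
qed

lemma cinner_self: "Re (cinner x x) = (norm x)\<^sup>2"
  unfolding norm_sq cinner_def cmod_power2 by (simp add: power2_eq_square)

lemma realify_norm: "(norm (realify x))\<^sup>2 = (norm x)\<^sup>2"
  by (simp add: power2_norm_eq_inner realify_inner cinner_self)

lemma realify_surj: "\<exists>x. y = realify x"
proof
  show "y = realify (\<chi> j. Complex (y$Inl j) (y$Inr j))"
    by (simp add: vec_eq_iff realify_def split: sum.split)
qed

lemma re_sq: "(Re z)\<^sup>2 = ((cmod z)\<^sup>2 + Re (z\<^sup>2)) / 2"
  by (simp add: cmod_power2 Re_power2)


lemma Q_scale: "(\<Sum>j<n. (cinner (c *s x) (v j))\<^sup>2) = c\<^sup>2 * (\<Sum>j<n. (cinner x (v j))\<^sup>2)"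
  by (simp add: cinner_scale power_mult_distrib sum_distrib_left)

lemma Q_M: "(\<Sum>j<n. (cinner x (v j))\<^sup>2) =
   (\<Sum>a\<in>UNIV. \<Sum>b\<in>UNIV. (\<Sum>j<n. cnj (v j $ a) * cnj (v j $ b)) * x$a * x$b)"
proof -
  have "(\<Sum>j<n. (cinner x (v j))\<^sup>2) =
     (\<Sum>j<n. \<Sum>a\<in>UNIV. \<Sum>b\<in>UNIV. cnj (v j $ a) * cnj (v j $ b) * x$a * x$b)"
    by (simp add: cinner_def power2_eq_square sum_product mult_ac)
  also have "\<dots> = (\<Sum>a\<in>UNIV. \<Sum>j<n. \<Sum>b\<in>UNIV. cnj (v j $ a) * cnj (v j $ b) * x$a * x$b)"
    by (rule sum.swap)
  also have "\<dots> = (\<Sum>a\<in>UNIV. \<Sum>b\<in>UNIV. \<Sum>j<n. cnj (v j $ a) * cnj (v j $ b) * x$a * x$b)"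
    by (rule sum.cong[OF refl], rule sum.swap)
  also have "\<dots> = (\<Sum>a\<in>UNIV. \<Sum>b\<in>UNIV. (\<Sum>j<n. cnj (v j $ a) * cnj (v j $ b)) * x$a * x$b)"
    by (simp add: sum_distrib_right)
  finally show ?thesis .
qed

lemma S_M: "(\<Sum>j<n. \<Sum>k<n. (cinner (v j) (v k))\<^sup>2) =
   complex_of_real (\<Sum>a\<in>UNIV. \<Sum>b\<in>UNIV. (cmod (\<Sum>j<n. cnj (v j $ a) * cnj (v j $ b)))\<^sup>2)"
proof -
  define f where "f j k a b = cnj (v k $ a) * cnj (v k $ b) * v j $ a * v j $ b" for j k a b
  have "(\<Sum>j<n. \<Sum>k<n. (cinner (v j) (v k))\<^sup>2) = (\<Sum>j<n. \<Sum>k<n. \<Sum>a\<in>UNIV. \<Sum>b\<in>UNIV. f j k a b)"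
    by (simp add: f_def cinner_def power2_eq_square sum_product mult_ac)
  also have "\<dots> = (\<Sum>j<n. \<Sum>a\<in>UNIV. \<Sum>k<n. \<Sum>b\<in>UNIV. f j k a b)"
    by (rule sum.cong[OF refl], rule sum.swap)
  also have "\<dots> = (\<Sum>a\<in>UNIV. \<Sum>j<n. \<Sum>k<n. \<Sum>b\<in>UNIV. f j k a b)"
    by (rule sum.swap)
  also have "\<dots> = (\<Sum>a\<in>UNIV. \<Sum>j<n. \<Sum>b\<in>UNIV. \<Sum>k<n. f j k a b)"
    by (intro sum.cong refl, rule sum.swap)
  also have "\<dots> = (\<Sum>a\<in>UNIV. \<Sum>b\<in>UNIV. \<Sum>j<n. \<Sum>k<n. f j k a b)"
    by (intro sum.cong refl, rule sum.swap)
  also have "\<dots> = (\<Sum>a\<in>UNIV. \<Sum>b\<in>UNIV. (\<Sum>k<n. cnj (v k $ a) * cnj (v k $ b)) * cnj (\<Sum>j<n. cnj (v j $ a) * cnj (v j $ b)))"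
    by (simp add: f_def cnj_sum sum_product mult_ac)
  also have "\<dots> = complex_of_real (\<Sum>a\<in>UNIV. \<Sum>b\<in>UNIV. (cmod (\<Sum>j<n. cnj (v j $ a) * cnj (v j $ b)))\<^sup>2)"
    by (simp only: of_real_sum complex_norm_square)
  finally show ?thesis .
qed


theorem theorem8:
  fixes v :: "nat \<Rightarrow> complex ^ 'd" and n :: nat
  shows "(tight_frame_R n (\<lambda>j. realify (v j)) \<longrightarrow> tight_frame_C n v)
    \<and> (tight_frame_C n v \<longrightarrow>
        ((tight_frame_R n (\<lambda>j. realify (v j)) \<longleftrightarrow>
            (\<Sum>j<n. \<Sum>k<n. (cinner (v j) (v k))\<^sup>2) = 0)
       \<and> (tight_frame_R n (\<lambda>j. realify (v j)) \<longleftrightarrow>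
            (\<Sum>j<n. \<Sum>k<n. (Re (cinner (v j) (v k)))\<^sup>2) =
            (\<Sum>j<n. \<Sum>k<n. (Im (cinner (v j) (v k)))\<^sup>2))))"
proof -
  define Q where "Q x = (\<Sum>j<n. (cinner x (v j))\<^sup>2)" for x
  define S where "S = (\<Sum>j<n. \<Sum>k<n. (cinner (v j) (v k))\<^sup>2)"
  define R where "R = tight_frame_R n (\<lambda>j. realify (v j))"
  have key: "(\<Sum>j<n. (Re (cinner x (v j)))\<^sup>2) = ((\<Sum>j<n. (cmod (cinner x (v j)))\<^sup>2) + Re (Q x)) / 2" for x
    by (simp add: re_sq Q_def sum_divide_distrib sum.distrib Re_sum add_divide_distrib)
  have realR: "R \<longleftrightarrow> (\<exists>B>0. \<forall>x. B * (norm x)\<^sup>2 = (\<Sum>j<n. (Re (cinner x (v j)))\<^sup>2))"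
  proof
    assume R
    then obtain B where B: "B > 0" "\<forall>y::real^('d+'d). B * (norm y)\<^sup>2 = (\<Sum>j<n. \<bar>y \<bullet> realify (v j)\<bar>\<^sup>2)"
      unfolding R_def tight_frame_R_def by blast
    show "\<exists>B>0. \<forall>x. B * (norm x)\<^sup>2 = (\<Sum>j<n. (Re (cinner x (v j)))\<^sup>2)"
    proof (intro exI[of _ B] conjI allI)
      fix x
      show "B * (norm x)\<^sup>2 = (\<Sum>j<n. (Re (cinner x (v j)))\<^sup>2)"
        using B(2)[rule_format, of "realify x"] by (simp add: realify_inner realify_norm)
    qed (rule B(1))
  next
    assume "\<exists>B>0. \<forall>x. B * (norm x)\<^sup>2 = (\<Sum>j<n. (Re (cinner x (v j)))\<^sup>2)"
    then obtain B where B: "B > 0" "\<forall>x. B * (norm x)\<^sup>2 = (\<Sum>j<n. (Re (cinner x (v j)))\<^sup>2)" by blast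
    show R unfolding R_def tight_frame_R_def
    proof (intro exI[of _ B] conjI allI)
      fix y :: "real^('d+'d)"
      obtain x where y: "y = realify x" using realify_surj by blast
      show "B * (norm y)\<^sup>2 = (\<Sum>j<n. \<bar>y \<bullet> realify (v j)\<bar>\<^sup>2)"
        using B(2)[rule_format, of x] by (simp add: y realify_inner realify_norm)
    qed (rule B(1))
  qed
  have nrmi: "(norm (c *s x))\<^sup>2 = (norm x)\<^sup>2" if "cmod c = 1" for c and x :: "complex^'d"
    using that by (simp add: norm_scale_sq)
  have part1: "R \<longrightarrow> tight_frame_C n v"
  proof
    assume R
    then obtain B where B: "B > 0" "\<forall>x. B * (norm x)\<^sup>2 = (\<Sum>j<n. (Re (cinner x (v j)))\<^sup>2)"
      using realR by blast
    show "tight_frame_C n v" unfolding tight_frame_C_def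
    proof (intro exI[of _ "2*B"] conjI allI)
      fix x :: "complex^'d"
      have "B * (norm x)\<^sup>2 = (\<Sum>j<n. (Re (cinner (\<i> *s x) (v j)))\<^sup>2)"
        using B(2)[rule_format, of "\<i> *s x"] nrmi[of \<i> x] by simp
      also have "\<dots> = (\<Sum>j<n. (Im (cinner x (v j)))\<^sup>2)"
        by (simp add: cinner_scale)
      finally have "B * (norm x)\<^sup>2 = (\<Sum>j<n. (Im (cinner x (v j)))\<^sup>2)" .
      then show "2 * B * (norm x)\<^sup>2 = (\<Sum>j<n. (cmod (cinner x (v j)))\<^sup>2)"
        using B(2)[rule_format, of x] by (simp add: cmod_power2 sum.distrib)
    qed (use B(1) in simp)
  qed
  have part2: "tight_frame_C n v \<longrightarrow> ((R \<longleftrightarrow> S = 0) \<and> (R \<longleftrightarrow>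
            (\<Sum>j<n. \<Sum>k<n. (Re (cinner (v j) (v k)))\<^sup>2) =
            (\<Sum>j<n. \<Sum>k<n. (Im (cinner (v j) (v k)))\<^sup>2)))"
  proof
    assume "tight_frame_C n v"
    then obtain A where A: "A > 0" "\<forall>x::complex^'d. A * (norm x)\<^sup>2 = (\<Sum>j<n. (cmod (cinner x (v j)))\<^sup>2)"
      unfolding tight_frame_C_def by blast
    define M where "M a b = (\<Sum>j<n. cnj (v j $ a) * cnj (v j $ b))" for a b
    have SM: "S = complex_of_real (\<Sum>a\<in>UNIV. \<Sum>b\<in>UNIV. (cmod (M a b))\<^sup>2)"
      unfolding S_def M_def by (rule S_M)
    have QS: "(\<forall>x. Q x = 0) \<longleftrightarrow> S = 0"
    proof
      assume "\<forall>x. Q x = 0"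
      then show "S = 0" unfolding S_def using Q_def by simp
    next
      assume "S = 0"
      then have "(\<Sum>a\<in>UNIV. \<Sum>b\<in>UNIV. (cmod (M a b))\<^sup>2) = 0" using SM by (simp only: of_real_eq_0_iff)
      then have "\<forall>a\<in>UNIV. (\<Sum>b\<in>UNIV. (cmod (M a b))\<^sup>2) = 0"
        by (subst (asm) sum_nonneg_eq_0_iff) (auto intro: sum_nonneg)
      then have "M a b = 0" for a b
        by (subst (asm) sum_nonneg_eq_0_iff) auto
      then show "\<forall>x. Q x = 0" unfolding Q_def by (simp add: Q_M M_def[symmetric])
    qed
    have RQ: "R \<longleftrightarrow> (\<forall>x. Q x = 0)"
    proof
      assume "\<forall>x. Q x = 0"
      then show R unfolding realR
        using A by (intro exI[of _ "A/2"]) (auto simp: key)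
    next
      assume R
      then obtain B where B: "\<forall>x. B * (norm x)\<^sup>2 = (\<Sum>j<n. (Re (cinner x (v j)))\<^sup>2)"
        using realR by blast
      have ReQ: "Re (Q x) = (2*B - A) * (norm x)\<^sup>2" for x
        using B[rule_format, of x] A(2)[rule_format, of x] by (simp add: key algebra_simps)
      have Qs: "Q (c *s x) = c\<^sup>2 * Q x" for c x unfolding Q_def by (rule Q_scale)
      have Re0: "Re (Q x) = 0" for x
        using ReQ[of x] ReQ[of "\<i> *s x"] nrmi[of \<i> x] Qs[of \<i> x] by simp
      show "\<forall>x. Q x = 0"
      proof
        fix x
        have "Re (Q ((1 + \<i>) *s x)) = 0" by (rule Re0)
        then have "Im (Q x) = 0" using Qs[of "1 + \<i>" x]
          by (simp add: power2_eq_square algebra_simps)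
        then show "Q x = 0" using Re0[of x] by (simp add: complex_eq_iff)
      qed
    qed
    have ImS: "Im S = 0" using SM by simp
    have ReS: "Re S = (\<Sum>j<n. \<Sum>k<n. (Re (cinner (v j) (v k)))\<^sup>2) - (\<Sum>j<n. \<Sum>k<n. (Im (cinner (v j) (v k)))\<^sup>2)"
      unfolding S_def by (simp add: Re_sum Re_power2 sum_subtractf)
    have "S = 0 \<longleftrightarrow> Re S = 0" using ImS by (simp add: complex_eq_iff)
    then show "(R \<longleftrightarrow> S = 0) \<and> (R \<longleftrightarrow>
            (\<Sum>j<n. \<Sum>k<n. (Re (cinner (v j) (v k)))\<^sup>2) =
            (\<Sum>j<n. \<Sum>k<n. (Im (cinner (v j) (v k)))\<^sup>2))"
      using RQ QS ReS by simp
  qed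
  show ?thesis using part1 part2 unfolding R_def S_def by blast
qed

end
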